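(* Let $K\ge2$ and $T\ge1$. Suppose arms $A_1,A_2,\dots\in[K]$ are chosen by any (possibly randomized, history-dependent) rule, and in each round $t$, given the past and $A_t$, $B_t$ is drawn uniformly from $[K]\setminus\{A_t\}$. Let $Z_t^a=\sum_{s=1}^t\mathbb 1(B_s=a)$. Then \[ \mathbb E\Big[\max_{a\in[K]}Z_{T-1}^a\Big]\le\frac{T-1}{K-1}+\sqrt{\frac T2\ln\!\big(\sqrt T(K-1)\big)}+2\sqrt T . \]
   Context: $[K]=\{1,\dots,K\}$. *)

theory Defs
  imports "HOL-Probability.Probability"
begin

definition Zcount :: "(nat \<Rightarrow> 'w \<Rightarrow> nat) \<Rightarrow> nat \<Rightarrow> nat \<Rightarrow> 'w \<Rightarrow> nat" where
  "Zcount B t a x = card {s \<in> {1..t}. B s x = a}"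

end

theory Submission
  imports Defs
begin

locale bset = prob_space M for M :: "'w measure" +
  fixes F :: "nat \<Rightarrow> 'w measure" and A B :: "nat \<Rightarrow> 'w \<Rightarrow> nat" and K :: nat
  assumes K2: "K \<ge> 2"
    and filt: "filtration (space M) F"
    and sub: "\<And>t. subalgebra M (F t)"
    and mA: "\<And>t. t \<ge> 1 \<Longrightarrow> A t \<in> measurable (F t) (count_space UNIV)"
    and mB: "\<And>t. t \<ge> 1 \<Longrightarrow> B t \<in> measurable (F t) (count_space UNIV)"
    and Ar: "\<And>t x. t \<ge> 1 \<Longrightarrow> x \<in> space M \<Longrightarrow> A t x \<in> {1..K}"
    and unif: "\<And>t E a b. t \<ge> 1 \<Longrightarrow> E \<in> sets (F (t - 1)) \<Longrightarrow>
           a \<in> {1..K} \<Longrightarrow> b \<in> {1..K} - {a} \<Longrightarrow>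
           measure M {x \<in> E. A t x = a \<and> B t x = b}
             = measure M {x \<in> E. A t x = a} / real (K - 1)"
begin

definition X :: "nat \<Rightarrow> nat \<Rightarrow> 'w \<Rightarrow> real" where
  "X s a x = (if B s x = a then 1 else 0) - (if A s x = a then 0 else 1 / real (K - 1))"

lemma mA': "t \<ge> 1 \<Longrightarrow> A t \<in> measurable M (count_space UNIV)"
  using measurable_from_subalg[OF sub mA] .
lemma mB': "t \<ge> 1 \<Longrightarrow> B t \<in> measurable M (count_space UNIV)"
  using measurable_from_subalg[OF sub mB] .

lemma Kpos: "real (K - 1) \<ge> 1" using K2 by simp

lemma X_meas: "s \<ge> 1 \<Longrightarrow> X s a \<in> borel_measurable M"
proof -
  assume s: "s \<ge> 1"
  note [measurable] = mA'[OF s] mB'[OF s]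
  show ?thesis unfolding X_def by measurable
qed

lemma q01: "0 \<le> 1 / real (K - 1)" "1 / real (K - 1) \<le> 1"
  using Kpos by (auto simp: divide_le_eq)

lemma X_bound: "\<bar>X s a x\<bar> \<le> 2"
proof -
  obtain q where q: "q = 1 / real (K - 1)" by simp
  have "0 \<le> q" "q \<le> 1" using q01 q by auto
  then show ?thesis unfolding X_def q[symmetric] by auto
qed

lemma int_bound: "f \<in> borel_measurable M \<Longrightarrow> (\<And>x. x \<in> space M \<Longrightarrow> \<bar>f x\<bar> \<le> C) \<Longrightarrow> integrable M (f :: 'w \<Rightarrow> real)"
  by (rule integrable_const_bound[where B=C]) auto

lemma sets_FM: "E \<in> sets (F t) \<Longrightarrow> E \<in> sets M"
  using sub[of t] unfolding subalgebra_def by auto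

lemma space_F: "space (F t) = space M"
  using sub[of t] unfolding subalgebra_def by auto

lemma setsB: "1 \<le> r \<Longrightarrow> r \<le> t \<Longrightarrow> {x \<in> space M. B r x = a} \<in> sets (F t)"
proof -
  assume r: "1 \<le> r" "r \<le> t"
  have "B r -` {a} \<inter> space (F r) \<in> sets (F r)" using measurable_sets[OF mB[OF r(1)], of "{a}"] by simp
  moreover have "B r -` {a} \<inter> space (F r) = {x \<in> space M. B r x = a}" using space_F by auto
  ultimately show ?thesis using filtration.sets_F_mono[OF filt r(2)] by auto
qed

lemma setsA: "1 \<le> r \<Longrightarrow> r \<le> t \<Longrightarrow> {x \<in> space M. A r x = a} \<in> sets (F t)"
proof -
  assume r: "1 \<le> r" "r \<le> t"
  have "A r -` {a} \<inter> space (F r) \<in> sets (F r)" using measurable_sets[OF mA[OF r(1)], of "{a}"] by simp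
  moreover have "A r -` {a} \<inter> space (F r) = {x \<in> space M. A r x = a}" using space_F by auto
  ultimately show ?thesis using filtration.sets_F_mono[OF filt r(2)] by auto
qed

lemma keyL:
  assumes s: "s \<ge> 1" and E: "E \<in> sets (F (s - 1))" and a: "a \<in> {1..K}"
  shows "(\<integral>x. indicator E x * X s a x \<partial>M) = 0"
proof -
  note [measurable] = mA'[OF s] mB'[OF s]
  have EM: "E \<in> sets M" using sets_FM[OF E] .
  have Esp: "E \<subseteq> space M" using sets.sets_into_space[OF EM] .
  have Sets: "\<And>P. {x \<in> E. P (A s x) (B s x)} \<in> sets M"
  proof -
    fix P :: "nat \<Rightarrow> nat \<Rightarrow> bool"
    have "{x \<in> space M. P (A s x) (B s x)} \<in> sets M" by measurable
    moreover have "{x \<in> E. P (A s x) (B s x)} = E \<inter> {x \<in> space M. P (A s x) (B s x)}" using Esp by auto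
    ultimately show "{x \<in> E. P (A s x) (B s x)} \<in> sets M" using EM by auto
  qed
  have S1: "\<And>c b. {x \<in> E. A s x = c \<and> B s x = b} \<in> sets M"
    subgoal for c b using Sets[of "\<lambda>c' b'. c' = c \<and> b' = b"] by simp done
  have S2: "\<And>c. {x \<in> E. A s x = c} \<in> sets M"
    subgoal for c using Sets[of "\<lambda>c' b'. c' = c"] by simp done
  have S3: "{x \<in> E. B s x = a} \<in> sets M"
    using Sets[of "\<lambda>c' b'. b' = a"] by simp
  have S4: "{x \<in> E. A s x \<noteq> a} \<in> sets M"
    using Sets[of "\<lambda>c' b'. c' \<noteq> a"] by simp
  define n where "n c = measure M {x \<in> E. A s x = c}" for c
  define m where "m c b = measure M {x \<in> E. A s x = c \<and> B s x = b}" for c b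
  have mu: "\<And>c b. c \<in> {1..K} \<Longrightarrow> b \<in> {1..K} - {c} \<Longrightarrow> m c b = n c / real (K - 1)"
    unfolding m_def n_def using unif[OF s E] by auto
  have cardK: "card ({1..K} - {a}) = K - 1" using a by auto
  have Kne: "real (K - 1) \<noteq> 0" using Kpos by auto
  have zero: "m a a = 0"
  proof -
    have "(\<Union>b\<in>{1..K}. {x \<in> E. A s x = a \<and> B s x = b}) \<subseteq> {x \<in> E. A s x = a}" by auto
    hence "measure M (\<Union>b\<in>{1..K}. {x \<in> E. A s x = a \<and> B s x = b}) \<le> n a"
      unfolding n_def by (intro finite_measure_mono S2)
    moreover have "measure M (\<Union>b\<in>{1..K}. {x \<in> E. A s x = a \<and> B s x = b}) = (\<Sum>b\<in>{1..K}. m a b)"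
      unfolding m_def by (intro finite_measure_finite_Union) (auto simp: S1 S2 disjoint_family_on_def)
    moreover have "(\<Sum>b\<in>{1..K}. m a b) = m a a + (\<Sum>b\<in>{1..K} - {a}. m a b)"
      using a by (simp add: sum.remove)
    moreover have "(\<Sum>b\<in>{1..K} - {a}. m a b) = (\<Sum>b\<in>{1..K} - {a}. n a / real (K - 1))"
      using mu a by (intro sum.cong) auto
    moreover have "\<dots> = n a" using cardK Kne by simp
    moreover have "m a a \<ge> 0" unfolding m_def by simp
    ultimately show ?thesis by linarith
  qed
  have mB: "measure M {x \<in> E. B s x = a} = (\<Sum>c\<in>{1..K}. m c a)"
  proof -
    have "{x \<in> E. B s x = a} = (\<Union>c\<in>{1..K}. {x \<in> E. A s x = c \<and> B s x = a})"
      using Ar[OF s] Esp by auto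
    thus ?thesis unfolding m_def
      by (simp, intro finite_measure_finite_Union) (auto simp: S1 S2 disjoint_family_on_def)
  qed
  also have "\<dots> = m a a + (\<Sum>c\<in>{1..K} - {a}. m c a)" using a by (simp add: sum.remove)
  also have "\<dots> = (\<Sum>c\<in>{1..K} - {a}. n c / real (K - 1))"
    using zero mu a by (auto intro!: sum.cong)
  finally have mB: "measure M {x \<in> E. B s x = a} = (\<Sum>c\<in>{1..K} - {a}. n c) / real (K - 1)"
    by (simp add: sum_divide_distrib)
  have mA: "measure M {x \<in> E. A s x \<noteq> a} = (\<Sum>c\<in>{1..K} - {a}. n c)"
  proof -
    have "{x \<in> E. A s x \<noteq> a} = (\<Union>c\<in>{1..K} - {a}. {x \<in> E. A s x = c})"
      using Ar[OF s] Esp by auto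
    thus ?thesis unfolding n_def
      by (simp, intro finite_measure_finite_Union) (auto simp: S1 S2 disjoint_family_on_def)
  qed
  have "(\<integral>x. indicator E x * X s a x \<partial>M) = (\<integral>x. indicator {x \<in> E. B s x = a} x - indicator {x \<in> E. A s x \<noteq> a} x / real (K - 1) \<partial>M)"
    by (intro Bochner_Integration.integral_cong) (auto simp: X_def indicator_def)
  also have "\<dots> = measure M {x \<in> E. B s x = a} - measure M {x \<in> E. A s x \<noteq> a} / real (K - 1)"
    using S3 S4 Esp by (subst Bochner_Integration.integral_diff) (auto simp: Int_absorb2 less_top[symmetric])
  also have "\<dots> = 0" using mA mB by simp
  finally show ?thesis .
qed

lemma intIX: "s \<ge> 1 \<Longrightarrow> E \<in> sets M \<Longrightarrow> integrable M (\<lambda>x. indicator E x * X s a x)"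
  apply (rule int_bound[where C=2])
   apply (intro borel_measurable_times borel_measurable_indicator X_meas; simp)
  using X_bound by (auto simp: indicator_def)

lemma intXX: "r \<ge> 1 \<Longrightarrow> s \<ge> 1 \<Longrightarrow> integrable M (\<lambda>x. X r a x * X s b x)"
  apply (rule int_bound[where C=4])
   apply (intro borel_measurable_times X_meas; simp)
  subgoal for x using mult_mono[OF X_bound[of r a x] X_bound[of s b x] _ abs_ge_zero] by (simp add: abs_mult)
  done

lemma intX: "s \<ge> 1 \<Longrightarrow> integrable M (X s a)"
  by (rule int_bound[where C=2]) (auto intro: X_meas X_bound)

lemma intX2: "s \<ge> 1 \<Longrightarrow> integrable M (\<lambda>x. (X s a x)^2)"
  using intXX[of s s a a] by (simp add: power2_eq_square)

lemma cross:
  assumes r: "1 \<le> r" "r < s" and a: "a \<in> {1..K}"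
  shows "(\<integral>x. X r a x * X s a x \<partial>M) = 0"
proof -
  have s: "s \<ge> 1" using r by simp
  define E1 where "E1 = {x \<in> space M. B r x = a}"
  define E2 where "E2 = {x \<in> space M. A r x = a}"
  have Kne: "real (K - 1) \<noteq> 0" using Kpos by auto
  have E1: "E1 \<in> sets (F (s - 1))" unfolding E1_def using setsB r by auto
  have E2: "E2 \<in> sets (F (s - 1))" unfolding E2_def using setsA r by auto
  have E0: "space M \<in> sets (F (s - 1))" using sets.top[of "F (s - 1)"] space_F by simp
  obtain q where q: "q = 1 / real (K - 1)" by simp
  have "(\<integral>x. X r a x * X s a x \<partial>M) = (\<integral>x. indicator E1 x * X s a x - indicator (space M) x * X s a x * q + indicator E2 x * X s a x * q \<partial>M)"
    by (intro Bochner_Integration.integral_cong refl) (auto simp: X_def[of r] q E1_def E2_def indicator_def algebra_simps)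
  also have "\<dots> = (\<integral>x. indicator E1 x * X s a x \<partial>M) - (\<integral>x. indicator (space M) x * X s a x \<partial>M) * q + (\<integral>x. indicator E2 x * X s a x \<partial>M) * q"
    using intIX[OF s sets_FM[OF E1]] intIX[OF s sets_FM[OF E2]] intIX[OF s sets_FM[OF E0]]
    by simp
  also have "\<dots> = 0" using keyL[OF s E1 a] keyL[OF s E2 a] keyL[OF s E0 a] by simp
  finally show ?thesis .
qed

definition N :: "nat \<Rightarrow> nat \<Rightarrow> 'w \<Rightarrow> real" where
  "N n a x = (\<Sum>s\<in>{1..n}. X s a x)"

lemma N2: assumes a: "a \<in> {1..K}"
  shows "(\<integral>x. (N n a x)^2 \<partial>M) = (\<Sum>s\<in>{1..n}. \<integral>x. (X s a x)^2 \<partial>M)"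
    "integrable M (\<lambda>x. (N n a x)^2)"
proof -
  have eq: "(\<lambda>x. (N n a x)^2) = (\<lambda>x. \<Sum>r\<in>{1..n}. \<Sum>s\<in>{1..n}. X r a x * X s a x)"
    by (simp add: N_def power2_eq_square sum_product)
  show "integrable M (\<lambda>x. (N n a x)^2)" unfolding eq
    by (intro Bochner_Integration.integrable_sum intXX) auto
  have "(\<integral>x. (N n a x)^2 \<partial>M) = (\<Sum>r\<in>{1..n}. \<Sum>s\<in>{1..n}. \<integral>x. X r a x * X s a x \<partial>M)"
    unfolding eq by (subst Bochner_Integration.integral_sum) (auto intro!: Bochner_Integration.integrable_sum intXX sum.cong Bochner_Integration.integral_sum)
  also have "\<dots> = (\<Sum>r\<in>{1..n}. \<Sum>s\<in>{1..n}. if r = s then \<integral>x. (X s a x)^2 \<partial>M else 0)"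
  proof (intro sum.cong refl)
    fix r s assume rs: "r \<in> {1..n}" "s \<in> {1..n}"
    show "(\<integral>x. X r a x * X s a x \<partial>M) = (if r = s then \<integral>x. (X s a x)^2 \<partial>M else 0)"
    proof (cases "r < s")
      case True thus ?thesis using cross[of r s a] rs a by simp
    next
      case False
      show ?thesis
      proof (cases "r = s")
        case True thus ?thesis by (simp add: power2_eq_square)
      next
        case False
        hence "s < r" using \<open>\<not> r < s\<close> by simp
        thus ?thesis using cross[of s r a] rs a False by (simp add: mult.commute)
      qed
    qed
  qed
  also have "\<dots> = (\<Sum>s\<in>{1..n}. \<integral>x. (X s a x)^2 \<partial>M)"
    by (simp add: sum.delta)
  finally show "(\<integral>x. (N n a x)^2 \<partial>M) = (\<Sum>s\<in>{1..n}. \<integral>x. (X s a x)^2 \<partial>M)" .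
qed

lemma bound2: "(\<Sum>a\<in>{1..K}. (X s a x)^2) \<le> 3"
proof -
  obtain q where q: "q = 1 / real (K - 1)" by simp
  have q0: "0 \<le> q" "q \<le> 1" using q01 q by auto
  have "(\<Sum>a\<in>{1..K}. (X s a x)^2) \<le> (\<Sum>a\<in>{1..K}. (if B s x = a then 1 else 0) + q)"
  proof (intro sum_mono)
    fix a
    have "q * q \<le> q" using q0 mult_left_le[of q q] by simp
    thus "(X s a x)^2 \<le> (if B s x = a then 1 else 0) + q"
      unfolding X_def q[symmetric] using q0 by (auto simp: power2_eq_square algebra_simps)
  qed
  also have "\<dots> = (if B s x \<in> {1..K} then 1 else 0) + real K * q"
    by (simp add: sum.distrib)
  also have "\<dots> \<le> 1 + 2"
  proof -
    have "real K * q \<le> 2" unfolding q using K2 by (simp add: divide_le_eq of_nat_diff)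
    thus ?thesis by simp
  qed
  finally show ?thesis by simp
qed

lemma sumN2: "(\<Sum>a\<in>{1..K}. \<integral>x. (N n a x)^2 \<partial>M) \<le> 3 * real n"
proof -
  have "(\<Sum>a\<in>{1..K}. \<integral>x. (N n a x)^2 \<partial>M) = (\<Sum>a\<in>{1..K}. \<Sum>s\<in>{1..n}. \<integral>x. (X s a x)^2 \<partial>M)"
    using N2 by simp
  also have "\<dots> = (\<Sum>s\<in>{1..n}. \<Sum>a\<in>{1..K}. \<integral>x. (X s a x)^2 \<partial>M)"
    by (rule sum.swap)
  also have "\<dots> = (\<Sum>s\<in>{1..n}. \<integral>x. (\<Sum>a\<in>{1..K}. (X s a x)^2) \<partial>M)"
    by (intro sum.cong refl, subst Bochner_Integration.integral_sum) (auto intro: intX2)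
  also have "\<dots> \<le> (\<Sum>s\<in>{1..n}. 3)"
  proof (intro sum_mono)
    fix s assume s: "s \<in> {1..n}"
    have "(\<integral>x. (\<Sum>a\<in>{1..K}. (X s a x)^2) \<partial>M) \<le> (\<integral>x. 3 \<partial>M)"
      using s by (intro integral_mono Bochner_Integration.integrable_sum intX2 bound2) auto
    thus "(\<integral>x. (\<Sum>a\<in>{1..K}. (X s a x)^2) \<partial>M) \<le> 3" by (simp add: prob_space)
  qed
  finally show ?thesis by simp
qed

lemma final:
  fixes T :: nat assumes T: "T \<ge> 1"
  shows "(\<integral>x. Max ((\<lambda>a. real (Zcount B (T - 1) a x)) ` {1..K}) \<partial>M)
           \<le> real (T - 1) / real (K - 1)
             + sqrt (real T / 2 * ln (sqrt (real T) * real (K - 1)))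
             + 2 * sqrt (real T)"
proof -
  define n where "n = T - 1"
  define c where "c = 2 * sqrt (real T)"
  have sT: "sqrt (real T) \<ge> 1" using T by simp
  have c0: "c > 0" unfolding c_def using sT by simp
  define G where "G x = real n / real (K - 1) + (\<Sum>a\<in>{1..K}. (N n a x)^2) / (2 * c) + c / 2" for x
  have q1: "1 / real (K - 1) \<ge> 0" using q01 by simp
  have pw: "Max ((\<lambda>a. real (Zcount B n a x)) ` {1..K}) \<le> G x" for x
  proof (subst Max_le_iff)
    show "finite ((\<lambda>a. real (Zcount B n a x)) ` {1..K})" by simp
    show "(\<lambda>a. real (Zcount B n a x)) ` {1..K} \<noteq> {}" using K2 by simp
    show "\<forall>z\<in>(\<lambda>a. real (Zcount B n a x)) ` {1..K}. z \<le> G x"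
    proof
      fix z assume "z \<in> (\<lambda>a. real (Zcount B n a x)) ` {1..K}"
      then obtain a where a: "a \<in> {1..K}" and z: "z = real (Zcount B n a x)" by auto
      have "real (Zcount B n a x) = (\<Sum>s\<in>{1..n}. if B s x = a then 1 else 0)"
        unfolding Zcount_def real_of_card by (simp only: sum.inter_filter[OF finite_atLeastAtMost])
      also have "\<dots> = N n a x + (\<Sum>s\<in>{1..n}. if A s x = a then 0 else 1 / real (K - 1))"
        unfolding N_def X_def by (simp add: sum.distrib[symmetric])
      also have "(\<Sum>s\<in>{1..n}. if A s x = a then 0 else 1 / real (K - 1)) \<le> (\<Sum>s\<in>{1..n}. 1 / real (K - 1))"
        using q1 by (intro sum_mono) auto
      also have "\<dots> = real n / real (K - 1)" by simp
      finally have Z: "z \<le> N n a x + real n / real (K - 1)" using z by simp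
      have "2 * c * N n a x \<le> (N n a x)^2 + c^2"
        using sum_squares_bound[of "N n a x" c] by (simp add: power2_eq_square mult_ac)
      hence "N n a x \<le> ((N n a x)^2 + c^2) / (2 * c)" using c0 by (simp add: le_divide_eq mult.commute)
      also have "\<dots> = (N n a x)^2 / (2 * c) + c / 2" using c0 by (simp add: field_simps power2_eq_square)
      also have "(N n a x)^2 \<le> (\<Sum>b\<in>{1..K}. (N n b x)^2)"
        using a by (intro member_le_sum) auto
      hence "(N n a x)^2 / (2 * c) + c / 2 \<le> (\<Sum>b\<in>{1..K}. (N n b x)^2) / (2 * c) + c / 2"
        using c0 by (simp add: divide_right_mono)
      finally show "z \<le> G x" using Z unfolding G_def by simp
    qed
  qed
  have G0: "G x \<ge> 0" for x unfolding G_def using c0 q1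
    by (intro add_nonneg_nonneg divide_nonneg_nonneg sum_nonneg) auto
  have intN: "integrable M (\<lambda>x. (N n a x)^2)" if "a \<in> {1..K}" for a using N2(2)[OF that] .
  have intG: "integrable M G" unfolding G_def
    by (intro Bochner_Integration.integrable_add integrable_divide_zero Bochner_Integration.integrable_sum intN integrable_const) auto
  have "(\<integral>x. Max ((\<lambda>a. real (Zcount B n a x)) ` {1..K}) \<partial>M) \<le> (\<integral>x. G x \<partial>M)"
    by (rule integral_mono'[OF intG pw G0])
  also have "(\<integral>x. G x \<partial>M) = real n / real (K - 1) + (\<Sum>a\<in>{1..K}. \<integral>x. (N n a x)^2 \<partial>M) / (2 * c) + c / 2"
  proof -
    have i1: "integrable M (\<lambda>x. (\<Sum>a\<in>{1..K}. (N n a x)^2) / (2 * c))"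
      by (intro integrable_divide_zero Bochner_Integration.integrable_sum intN) auto
    have i2: "integrable M (\<lambda>x. real n / real (K - 1) + (\<Sum>a\<in>{1..K}. (N n a x)^2) / (2 * c))"
      using i1 by (intro Bochner_Integration.integrable_add) auto
    show ?thesis unfolding G_def
      apply (subst Bochner_Integration.integral_add[OF i2 integrable_const])
      apply (subst Bochner_Integration.integral_add[OF integrable_const i1])
      apply (simp only: integral_divide_zero)
      apply (subst Bochner_Integration.integral_sum)
      using intN by (auto simp: prob_space)
  qed
  also have "\<dots> \<le> real n / real (K - 1) + 3 * real n / (2 * c) + c / 2"
    using sumN2[of n] c0 by (simp add: divide_right_mono)
  also have "3 * real n / (2 * c) \<le> sqrt (real T)"
  proof -
    have "3 * real n \<le> sqrt (real T) * (2 * c)"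
    proof -
      have "sqrt (real T) * (2 * c) = 4 * (sqrt (real T) * sqrt (real T))" unfolding c_def by simp
      also have "\<dots> = 4 * real T" by simp
      finally have e: "sqrt (real T) * (2 * c) = 4 * real T" .
      have "3 * real n \<le> 4 * real T" unfolding n_def using T by (simp add: of_nat_diff)
      thus ?thesis using e by linarith
    qed
    thus ?thesis using c0 by (simp add: divide_le_eq)
  qed
  also have "c / 2 = sqrt (real T)" unfolding c_def by simp
  finally have fin: "(\<integral>x. Max ((\<lambda>a. real (Zcount B n a x)) ` {1..K}) \<partial>M) \<le> real n / real (K - 1) + sqrt (real T) + sqrt (real T)" by simp
  have sq0: "0 \<le> sqrt (real T / 2 * ln (sqrt (real T) * real (K - 1)))"
  proof -
    have "1 \<le> sqrt (real T) * real (K - 1)" using sT Kpos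
      by (metis mult_mono' mult_1_left zero_le_one)
    hence "0 \<le> ln (sqrt (real T) * real (K - 1))" by (rule ln_ge_zero)
    thus ?thesis by simp
  qed
  from fin have fin2: "(\<integral>x. Max ((\<lambda>a. real (Zcount B (T - 1) a x)) ` {1..K}) \<partial>M) \<le> real (T - 1) / real (K - 1) + sqrt (real T) + sqrt (real T)" unfolding n_def .
  show ?thesis by (rule order_trans[OF fin2]) (use sq0 in simp)
qed

end

theorem mainTheorem7:
  fixes M :: "'w measure" and F :: "nat \<Rightarrow> 'w measure"
    and A B :: "nat \<Rightarrow> 'w \<Rightarrow> nat" and K T :: nat
  assumes "prob_space M"
    and "K \<ge> 2" and "T \<ge> 1"
    and "filtration (space M) F"
    and "\<And>t. subalgebra M (F t)"
    and "\<And>t. t \<ge> 1 \<Longrightarrow> A t \<in> measurable (F t) (count_space UNIV)"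
    and "\<And>t. t \<ge> 1 \<Longrightarrow> B t \<in> measurable (F t) (count_space UNIV)"
    and "\<And>t x. t \<ge> 1 \<Longrightarrow> x \<in> space M \<Longrightarrow> A t x \<in> {1..K}"
    and "\<And>t E a b. t \<ge> 1 \<Longrightarrow> E \<in> sets (F (t - 1)) \<Longrightarrow>
           a \<in> {1..K} \<Longrightarrow> b \<in> {1..K} - {a} \<Longrightarrow>
           measure M {x \<in> E. A t x = a \<and> B t x = b}
             = measure M {x \<in> E. A t x = a} / real (K - 1)"
  shows "(\<integral>x. Max ((\<lambda>a. real (Zcount B (T - 1) a x)) ` {1..K}) \<partial>M)
           \<le> real (T - 1) / real (K - 1)
             + sqrt (real T / 2 * ln (sqrt (real T) * real (K - 1)))
             + 2 * sqrt (real T)"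
proof -
  interpret bset M F A B K
    unfolding bset_def bset_axioms_def using assms by auto
  show ?thesis using final[OF assms(3)] .
qed

end
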